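(* In the directed polymer on a disordered $d$-ary tree with non-disordered defect subtree described in the context, fix $\beta>0$ and let $t\in(0,1)$ satisfy \[\Big(\frac{\Theta(\beta)}{d^2e^{2\lambda(\beta)}}\Big)^{1-t}<d_1^{\,t}.\] Then for every $u\in\mathbb{R}$, \[\liminf_{n\to\infty}\frac1n\log Z^{ST}_n(\beta,u)\geq(\lambda(\beta)+\log d)(1-t)+(\beta u+\log d_1)t\quad\text{a.s.}\]
   Context: Let $d\geq2$, $1\leq d_1<d$. $\mathbb{T}$ is the rooted $d$-ary tree with nodes $(k,j)$ ($k$ the generation, root $\mathbf 0=(0,1)$, children of $(k,j)$ are $(k+1,(j-1)d+\ell)$, $1\le\ell\le d$). $\tilde{\mathbb{T}}$ is the left-most $d_1$-regular subtree: it contains the root and, for $x=(k,j)\in\tilde{\mathbb{T}}$, the children $(k+1,d(j-1)+\ell)$, $1\le\ell\le d_1$. Let $V$ be a non-degenerate real random variable with $\lambda(\beta):=\log\mathbf{E}[e^{\beta V}]<\infty$ for all real $\beta$. Set $V(x)=u$ for $x\in\tilde{\mathbb{T}}$ and let $V(x)$, $x\in\mathbb{T}\setminus\tilde{\mathbb{T}}$, be i.i.d. copies of $V$. $Z^{ST}_n(\beta,u)=\sum_W\exp(\beta\sum_{y\in W\setminus\{\mathbf 0\}}V(y))$ over all directed paths $W$ from $\mathbf 0$ to generation $n$. $\Theta(\beta):=\max\{d^2e^{2\lambda(\beta)},\ de^{\lambda(2\beta)}\}$; equivalently, $\Theta(\beta)=\lim_n(\mathrm{Var}(e^{\beta V^*}Z^{HD}_n(\beta)))^{1/n}$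 where $Z^{HD}_n(\beta)$ is the partition function of the $d$-ary tree with i.i.d. copies of $V$ at all vertices and $V^*$ is an independent copy of $V$. *)

theory Defs
  imports "HOL-Probability.Probability"
begin

text \<open>Nodes are pairs (k, j): generation k, position j (1-based).
  The full d-ary tree, and the left-most d1-regular subtree (defect subtree).\<close>

inductive_set dary_tree :: "nat \<Rightarrow> (nat \<times> nat) set" for d :: nat where
  root: "(0, 1) \<in> dary_tree d"
| child: "(k, j) \<in> dary_tree d \<Longrightarrow> 1 \<le> l \<Longrightarrow> l \<le> d \<Longrightarrow>
            (Suc k, (j - 1) * d + l) \<in> dary_tree d"

inductive_set defect_tree :: "nat \<Rightarrow> nat \<Rightarrow> (nat \<times> nat) set" for d d1 :: nat where
  root: "(0, 1) \<in> defect_tree d d1"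
| child: "(k, j) \<in> defect_tree d d1 \<Longrightarrow> 1 \<le> l \<Longrightarrow> l \<le> d1 \<Longrightarrow>
            (Suc k, (j - 1) * d + l) \<in> defect_tree d d1"

text \<open>A directed path from the root to generation n is encoded by the list of
  child labels l_1, ..., l_n in {1..d}; its node in generation k is
  (k, path_pos d (take k ls)).\<close>

definition path_pos :: "nat \<Rightarrow> nat list \<Rightarrow> nat" where
  "path_pos d ls = foldl (\<lambda>j l. (j - 1) * d + l) 1 ls"

definition paths :: "nat \<Rightarrow> nat \<Rightarrow> nat list set" where
  "paths d n = {ls. length ls = n \<and> set ls \<subseteq> {1..d}}"

definition env :: "nat \<Rightarrow> nat \<Rightarrow> real \<Rightarrow> (nat \<times> nat \<Rightarrow> 'a \<Rightarrow> real) \<Rightarrow> nat \<times> nat \<Rightarrow> 'a \<Rightarrow> real" where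
  "env d d1 u X x \<omega> = (if x \<in> defect_tree d d1 then u else X x \<omega>)"

definition Z_ST :: "nat \<Rightarrow> nat \<Rightarrow> (nat \<times> nat \<Rightarrow> 'a \<Rightarrow> real) \<Rightarrow> real \<Rightarrow> real \<Rightarrow> nat \<Rightarrow> 'a \<Rightarrow> real" where
  "Z_ST d d1 X \<beta> u n \<omega> =
     (\<Sum>ls\<in>paths d n. exp (\<beta> * (\<Sum>k\<in>{1..n}. env d d1 u X (k, path_pos d (take k ls)) \<omega>)))"

definition lam :: "'a measure \<Rightarrow> ('a \<Rightarrow> real) \<Rightarrow> real \<Rightarrow> real" where
  "lam M V \<beta> = ln (integral\<^sup>L M (\<lambda>\<omega>. exp (\<beta> * V \<omega>)))"

definition Theta :: "'a measure \<Rightarrow> ('a \<Rightarrow> real) \<Rightarrow> nat \<Rightarrow> real \<Rightarrow> real" where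
  "Theta M V d \<beta> = max ((real d)^2 * exp (2 * lam M V \<beta>)) (real d * exp (lam M V (2 * \<beta>)))"

end

theory Submission
  imports Defs
begin


fun cpl :: "nat list \<Rightarrow> nat list \<Rightarrow> nat" where
  "cpl (a#as) (b#bs) = (if a = b then Suc (cpl as bs) else 0)"
| "cpl _ _ = 0"

lemma take_eq_iff_cpl:
  "length p = length q \<Longrightarrow> j \<le> length p \<Longrightarrow> (take j p = take j q) \<longleftrightarrow> j \<le> cpl p q"
proof (induction p arbitrary: q j)
  case Nil then show ?case by simp
next
  case (Cons a p)
  then obtain b q' where q: "q = b # q'" by (cases q) auto
  show ?case
  proof (cases j)
    case 0 then show ?thesis by simp
  next
    case (Suc j')
    then show ?thesis using Cons.IH[of q' j'] Cons.prems q by auto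
  qed
qed

lemma cpl_le: "cpl p q \<le> length p"
  by (induction p q rule: cpl.induct) auto

lemma cpl_append_same: "cpl (a @ c) (a @ c') = length a + cpl c c'"
  by (induction a) auto

lemma cpl_append_diff:
  "length a = length a' \<Longrightarrow> a \<noteq> a' \<Longrightarrow> cpl (a @ c) (a' @ c') < length a"
proof (induction a arbitrary: a')
  case Nil then show ?case by simp
next
  case (Cons x a)
  then obtain y b where a': "a' = y # b" by (cases a') auto
  then show ?case using Cons by auto
qed

lemma paths_Suc: "paths d (Suc n) = (\<lambda>(l,b). l # b) ` ({1..d} \<times> paths d n)"
  unfolding paths_def
proof (intro set_eqI iffI)
  fix x assume "x \<in> {ls. length ls = Suc n \<and> set ls \<subseteq> {1..d}}"
  then obtain l b where "x = l # b" "length b = n" "set b \<subseteq> {1..d}" "l \<in> {1..d}"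
    by (cases x) auto
  then show "x \<in> (\<lambda>(l,b). l # b) ` ({1..d} \<times> {ls. length ls = n \<and> set ls \<subseteq> {1..d}})"
    by force
qed auto

lemma paths_0: "paths d 0 = {[]}" by (auto simp: paths_def)

lemma finite_paths: "finite (paths d n)"
  by (induction n) (auto simp: paths_0 paths_Suc)

lemma card_paths: "card (paths d n) = d ^ n"
proof (induction n)
  case 0 then show ?case by (simp add: paths_0)
next
  case (Suc n)
  have "inj_on (\<lambda>(l,b). l # b) ({1..d} \<times> paths d n)" by (auto simp: inj_on_def)
  then show ?case by (simp add: paths_Suc card_image card_cartesian_product Suc)
qed

lemma path_pos_snoc: "path_pos d (ls @ [l]) = (path_pos d ls - 1) * d + l"
  by (simp add: path_pos_def)

lemma path_pos_ge1: "set ls \<subseteq> {1..d} \<Longrightarrow> path_pos d ls \<ge> 1"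
  by (induction ls rule: rev_induct) (auto simp: path_pos_snoc path_pos_def)

lemma divmod_unique_nat:
  fixes x y r s d :: nat
  assumes "x * d + r = y * d + s" "r < d" "s < d"
  shows "x = y \<and> r = s"
proof -
  have d0: "d > 0" using assms by auto
  have "(x * d + r) div d = x" "(y * d + s) div d = y" using assms(2,3) d0 by simp_all
  moreover have "(x * d + r) mod d = r" "(y * d + s) mod d = s" using assms(2,3) by auto
  moreover have "(x * d + r) div d = (y * d + s) div d" "(x * d + r) mod d = (y * d + s) mod d"
    using assms(1) by simp_all
  ultimately show ?thesis by simp
qed

lemma path_pos_inj:
  "length a = length b \<Longrightarrow> set a \<subseteq> {1..d} \<Longrightarrow> set b \<subseteq> {1..d} \<Longrightarrow> path_pos d a = path_pos d b \<Longrightarrow> a = b"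
proof (induction a arbitrary: b rule: rev_induct)
  case Nil then show ?case by simp
next
  case (snoc l a)
  obtain b' l' where b: "b = b' @ [l']"
    using snoc.prems(1) by (cases b rule: rev_cases) auto
  have l: "1 \<le> l" "l \<le> d" "1 \<le> l'" "l' \<le> d" using snoc.prems b by auto
  have p1: "path_pos d a \<ge> 1" "path_pos d b' \<ge> 1"
    using snoc.prems b path_pos_ge1[of a d] path_pos_ge1[of b' d] by auto
  have "(path_pos d a - 1) * d + (l - 1) = (path_pos d b' - 1) * d + (l' - 1)"
    using snoc.prems(4) l by (simp add: b path_pos_snoc)
  then have "path_pos d a - 1 = path_pos d b' - 1 \<and> l - 1 = l' - 1"
    by (rule divmod_unique_nat) (use l in auto)
  then have "path_pos d a = path_pos d b'" "l = l'" using p1 l by auto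
  then show ?case using snoc b by auto
qed

lemma defect_mem: "set ls \<subseteq> {1..d1} \<Longrightarrow> (length ls, path_pos d ls) \<in> defect_tree d d1"
proof (induction ls rule: rev_induct)
  case Nil then show ?case by (metis One_nat_def defect_tree.root list.size(3) path_pos_def foldl_Nil)
next
  case (snoc l ls)
  have "(Suc (length ls), (path_pos d ls - 1) * d + l) \<in> defect_tree d d1"
    by (rule defect_tree.child) (use snoc in auto)
  then show ?case by (simp add: path_pos_snoc)
qed

lemma dary_mem: "set ls \<subseteq> {1..d} \<Longrightarrow> (length ls, path_pos d ls) \<in> dary_tree d"
proof (induction ls rule: rev_induct)
  case Nil then show ?case by (metis One_nat_def dary_tree.root list.size(3) path_pos_def foldl_Nil)
next
  case (snoc l ls)
  have "(Suc (length ls), (path_pos d ls - 1) * d + l) \<in> dary_tree d"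
    by (rule dary_tree.child) (use snoc in auto)
  then show ?case by (simp add: path_pos_snoc)
qed

lemma defect_char: "(k, j) \<in> defect_tree d d1 \<Longrightarrow> \<exists>ls. length ls = k \<and> set ls \<subseteq> {1..d1} \<and> j = path_pos d ls"
proof (induction k j rule: defect_tree.induct)
  case root then show ?case by (intro exI[of _ "[]"]) (simp add: path_pos_def)
next
  case (child k j l)
  then obtain ls where "length ls = k" "set ls \<subseteq> {1..d1}" "j = path_pos d ls" by auto
  then show ?case using child by (intro exI[of _ "ls @ [l]"]) (auto simp: path_pos_snoc)
qed



lemma sum_pairs_delta:
  fixes h :: "'b \<Rightarrow> 'b \<Rightarrow> real"
  assumes fA: "finite A" and fB: "finite B"
  shows "(\<Sum>(a,b)\<in>A \<times> B. \<Sum>(a',b')\<in>A \<times> B. if a = a' then h b b' else 0) = card A * (\<Sum>b\<in>B. \<Sum>b'\<in>B. h b b')"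
proof -
  have inner: "(\<Sum>(a',b')\<in>A \<times> B. if a = a' then h b b' else 0) = (\<Sum>b'\<in>B. h b b')" if "a \<in> A" for a b
  proof -
    have "(\<Sum>(a',b')\<in>A \<times> B. if a = a' then h b b' else 0) = (\<Sum>a'\<in>A. \<Sum>b'\<in>B. if a = a' then h b b' else 0)"
      by (rule sum.cartesian_product[symmetric])
    also have "\<dots> = (\<Sum>a'\<in>A. if a = a' then (\<Sum>b'\<in>B. h b b') else 0)"
      by (intro sum.cong) auto
    also have "\<dots> = (\<Sum>b'\<in>B. h b b')" using fA that by simp
    finally show ?thesis .
  qed
  have "(\<Sum>(a,b)\<in>A \<times> B. \<Sum>(a',b')\<in>A \<times> B. if a = a' then h b b' else 0) = (\<Sum>(a,b)\<in>A \<times> B. \<Sum>b'\<in>B. h b b')"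
    by (intro sum.cong) (auto simp: inner)
  also have "\<dots> = (\<Sum>a\<in>A. \<Sum>b\<in>B. \<Sum>b'\<in>B. h b b')"
    by (rule sum.cartesian_product[symmetric])
  also have "\<dots> = card A * (\<Sum>b\<in>B. \<Sum>b'\<in>B. h b b')" by simp
  finally show ?thesis .
qed

definition Tsum :: "nat \<Rightarrow> nat \<Rightarrow> real \<Rightarrow> real" where
  "Tsum d m \<rho> = (\<Sum>b\<in>paths d m. \<Sum>b'\<in>paths d m. \<rho> ^ cpl b b')"

lemma Tsum_Suc:
  assumes "\<rho> \<ge> 0"
  shows "Tsum d (Suc m) \<rho> \<le> real d * \<rho> * Tsum d m \<rho> + (real d ^ 2) ^ Suc m"
proof -
  let ?f = "\<lambda>(l::nat, b). l # b"
  let ?A = "{1..d} \<times> paths d m"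
  have inj: "inj_on ?f ?A" by (auto simp: inj_on_def)
  have fin: "finite ?A" using finite_paths by auto
  have "Tsum d (Suc m) \<rho> = (\<Sum>x\<in>?A. \<Sum>y\<in>?A. \<rho> ^ cpl (?f x) (?f y))"
    unfolding Tsum_def paths_Suc by (simp only: sum.reindex[OF inj] comp_def)
  also have "\<dots> \<le> (\<Sum>x\<in>?A. \<Sum>y\<in>?A. (case x of (l,b) \<Rightarrow> case y of (l',b') \<Rightarrow> if l = l' then \<rho> * \<rho> ^ cpl b b' else 0) + 1)"
    using assms by (intro sum_mono) auto
  also have "\<dots> = (\<Sum>x\<in>?A. \<Sum>y\<in>?A. (case x of (l,b) \<Rightarrow> case y of (l',b') \<Rightarrow> if l = l' then \<rho> * \<rho> ^ cpl b b' else 0)) + real (card ?A) * real (card ?A)"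
    by (simp add: sum.distrib)
  also have "(\<Sum>x\<in>?A. \<Sum>y\<in>?A. (case x of (l,b) \<Rightarrow> case y of (l',b') \<Rightarrow> if l = l' then \<rho> * \<rho> ^ cpl b b' else 0))
      = real d * (\<Sum>b\<in>paths d m. \<Sum>b'\<in>paths d m. \<rho> * \<rho> ^ cpl b b')"
    using sum_pairs_delta[of "{1..d}" "paths d m" "\<lambda>b b'. \<rho> * \<rho> ^ cpl b b'"] finite_paths
    by (simp add: case_prod_unfold)
  also have "real (card ?A) * real (card ?A) = (real d ^ 2) ^ Suc m"
    by (simp add: card_cartesian_product card_paths power_mult_distrib power2_eq_square power_mult[symmetric] algebra_simps)
  finally show ?thesis by (simp add: Tsum_def sum_distrib_left mult.assoc)
qed

lemma Tsum_bound:
  assumes "\<rho> \<ge> 0"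
  shows "Tsum d m \<rho> \<le> real (Suc m) * (max (real d * \<rho>) (real d ^ 2)) ^ m"
proof (induction m)
  case 0 then show ?case by (simp add: Tsum_def paths_0)
next
  case (Suc m)
  let ?T = "max (real d * \<rho>) (real d ^ 2)"
  have T0: "?T \<ge> 0" by (simp add: le_max_iff_disj)
  have Tn: "Tsum d m \<rho> \<ge> 0" unfolding Tsum_def using assms by (intro sum_nonneg) auto
  have "Tsum d (Suc m) \<rho> \<le> real d * \<rho> * Tsum d m \<rho> + (real d ^ 2) ^ Suc m" by (rule Tsum_Suc[OF assms])
  also have "\<dots> \<le> ?T * (real (Suc m) * ?T ^ m) + ?T ^ Suc m"
  proof (intro add_mono mult_mono Suc power_mono)
    show "real d * \<rho> \<le> ?T" by simp
    show "real d ^ 2 \<le> ?T" by simp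
  qed (use assms T0 Tn in auto)
  also have "\<dots> = real (Suc (Suc m)) * ?T ^ Suc m"
  proof -
    have "\<And>x y::real. x * (real (Suc m) * y) + x * y = real (Suc (Suc m)) * (x * y)" by (simp add: algebra_simps)
    then show ?thesis by (simp only: power_Suc)
  qed
  finally show ?case .
qed

lemma summable_nq:
  fixes q :: real
  assumes q0: "0 \<le> q" and q1: "q < 1"
  shows "summable (\<lambda>n. real n * q ^ n)"
proof (rule summable_ratio_test)
  let ?c = "(1 + q) / 2"
  show "?c < 1" using q1 by simp
  fix n :: nat assume n: "n \<ge> nat \<lceil>2 / (1 - q)\<rceil>"
  have "real n \<ge> 2 / (1 - q)" using n by linarith
  then have a: "real n * (1 - q) \<ge> 2" using q1 by (simp add: field_simps)
  have e: "(real n + 1) * (1 + q) - 2 * (real n + 1) * q = real n * (1 - q) + 1 - q"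
    by (simp add: algebra_simps)
  have "(real n + 1) * q \<le> ?c * real n"
  proof -
    have "2 * ((real n + 1) * q) \<le> (1 + q) * real n"
      using a q1 by (simp add: algebra_simps)
    then show ?thesis by (simp add: field_simps)
  qed
  then have "((real n + 1) * q) * q ^ n \<le> (?c * real n) * q ^ n"
    using q0 by (intro mult_right_mono) auto
  then show "norm (real (Suc n) * q ^ Suc n) \<le> ?c * norm (real n * q ^ n)"
    using q0 by (simp add: algebra_simps)
qed

lemma nat_floor_bounds:
  fixes x :: real
  assumes "x \<ge> 0"
  shows "real (nat \<lfloor>x\<rfloor>) \<le> x" "x - 1 < real (nat \<lfloor>x\<rfloor>)"
proof -
  have "0 \<le> \<lfloor>x\<rfloor>" using assms by simp
  then have e: "real (nat \<lfloor>x\<rfloor>) = real_of_int \<lfloor>x\<rfloor>" by simp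
  show "real (nat \<lfloor>x\<rfloor>) \<le> x" unfolding e by (rule of_int_floor_le)
  show "x - 1 < real (nat \<lfloor>x\<rfloor>)" unfolding e by linarith
qed

lemma floor_ratio:
  fixes t :: real
  assumes "0 < t"
  shows "(\<lambda>n. real (nat \<lfloor>t * real n\<rfloor>) / real n) \<longlonglongrightarrow> t"
proof (rule tendsto_sandwich)
  show "\<forall>\<^sub>F n in sequentially. t - 1 / real n \<le> real (nat \<lfloor>t * real n\<rfloor>) / real n"
    using eventually_ge_at_top[of "1::nat"]
  proof eventually_elim
    case (elim n)
    have np: "real n > 0" using elim by simp
    have "t * real n - 1 \<le> real (nat \<lfloor>t * real n\<rfloor>)" using nat_floor_bounds(2)[of "t * real n"] assms by simp
    then have "(t * real n - 1) / real n \<le> real (nat \<lfloor>t * real n\<rfloor>) / real n"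
      by (rule divide_right_mono) (use np in simp)
    moreover have "(t * real n - 1) / real n = t - 1 / real n" using np by (simp add: field_simps)
    ultimately show ?case by simp
  qed
  show "\<forall>\<^sub>F n in sequentially. real (nat \<lfloor>t * real n\<rfloor>) / real n \<le> t"
    using eventually_ge_at_top[of "1::nat"]
  proof eventually_elim
    case (elim n)
    have np: "real n > 0" using elim by simp
    have "real (nat \<lfloor>t * real n\<rfloor>) \<le> t * real n" using nat_floor_bounds(1)[of "t * real n"] assms by simp
    then have "real (nat \<lfloor>t * real n\<rfloor>) / real n \<le> (t * real n) / real n"
      by (rule divide_right_mono) (use np in simp)
    then show ?case using np by simp
  qed
  show "(\<lambda>n. t - 1 / real n) \<longlonglongrightarrow> t"
    using tendsto_diff[OF tendsto_const lim_const_over_n[of "1::real"]] by simp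
qed (rule tendsto_const)

locale poly = prob_space M for M :: "'a measure" +
  fixes V :: "'a \<Rightarrow> real" and X :: "nat \<times> nat \<Rightarrow> 'a \<Rightarrow> real" and d d1 :: nat and \<beta> :: real
  assumes d_ge: "d \<ge> 2" and d1_ge: "1 \<le> d1" and d1_lt: "d1 < d"
    and V_meas: "V \<in> borel_measurable M"
    and V_int: "\<And>b. integrable M (\<lambda>\<omega>. exp (b * V \<omega>))"
    and indep: "indep_vars (\<lambda>_. borel) X (dary_tree d - defect_tree d d1)"
    and distrX: "\<And>x. x \<in> dary_tree d - defect_tree d d1 \<Longrightarrow> distr M borel (X x) = distr M borel V"
begin

abbreviation "I \<equiv> dary_tree d - defect_tree d d1"

definition Phi :: "real \<Rightarrow> real" where
  "Phi c = (\<integral>\<omega>. exp (c * V \<omega>) \<partial>M)"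

lemma X_meas: "x \<in> I \<Longrightarrow> X x \<in> borel_measurable M"
  using indep unfolding indep_vars_def by auto

lemma Phi_pos: "Phi c > 0"
proof -
  have int: "integrable M (\<lambda>\<omega>. exp (c * V \<omega>))" by (rule V_int)
  have ge: "Phi c \<ge> 0" unfolding Phi_def by (rule integral_nonneg_AE) auto
  have "Phi c \<noteq> 0"
  proof
    assume "Phi c = 0"
    then have "AE \<omega> in M. exp (c * V \<omega>) = 0"
      using integral_nonneg_eq_0_iff_AE[OF int] unfolding Phi_def by auto
    then have "AE \<omega> in M. False" by simp
    then show False by simp
  qed
  then show ?thesis using ge by simp
qed

lemma X_exp:
  assumes "x \<in> I"
  shows "integrable M (\<lambda>\<omega>. exp (c * X x \<omega>))" "(\<integral>\<omega>. exp (c * X x \<omega>) \<partial>M) = Phi c"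
proof -
  have m: "X x \<in> measurable M borel" using X_meas assms by simp
  have g: "(\<lambda>y::real. exp (c * y)) \<in> borel_measurable borel" by measurable
  have "integrable M (\<lambda>\<omega>. exp (c * X x \<omega>)) \<longleftrightarrow> integrable (distr M borel (X x)) (\<lambda>y. exp (c * y))"
    using integrable_distr_eq[OF m g] by simp
  also have "\<dots> \<longleftrightarrow> integrable (distr M borel V) (\<lambda>y. exp (c * y))" using distrX assms by simp
  also have "\<dots> \<longleftrightarrow> integrable M (\<lambda>\<omega>. exp (c * V \<omega>))"
    using integrable_distr_eq[OF V_meas g] by simp
  finally show "integrable M (\<lambda>\<omega>. exp (c * X x \<omega>))" using V_int by simp
  have "(\<integral>\<omega>. exp (c * X x \<omega>) \<partial>M) = integral\<^sup>L (distr M borel (X x)) (\<lambda>y. exp (c * y))"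
    using integral_distr[OF m g] by simp
  also have "\<dots> = integral\<^sup>L (distr M borel V) (\<lambda>y. exp (c * y))" using distrX assms by simp
  also have "\<dots> = Phi c" unfolding Phi_def using integral_distr[OF V_meas g] by simp
  finally show "(\<integral>\<omega>. exp (c * X x \<omega>) \<partial>M) = Phi c" .
qed

lemma prod_exp:
  assumes "finite C" "C \<subseteq> I"
  shows "integrable M (\<lambda>\<omega>. \<Prod>x\<in>C. exp (c x * X x \<omega>))"
    and "(\<integral>\<omega>. (\<Prod>x\<in>C. exp (c x * X x \<omega>)) \<partial>M) = (\<Prod>x\<in>C. Phi (c x))"
proof -
  have "indep_vars (\<lambda>_. borel) (\<lambda>x \<omega>. exp (c x * X x \<omega>)) I"
    by (rule indep_vars_compose2[OF indep]) measurable
  then have ind: "indep_vars (\<lambda>_. borel) (\<lambda>x \<omega>. exp (c x * X x \<omega>)) C"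
    using indep_vars_subset assms(2) by blast
  have int: "\<And>x. x \<in> C \<Longrightarrow> integrable M (\<lambda>\<omega>. exp (c x * X x \<omega>))"
    using X_exp assms(2) by blast
  show "integrable M (\<lambda>\<omega>. \<Prod>x\<in>C. exp (c x * X x \<omega>))"
    using indep_vars_integrable[OF assms(1) ind int] by simp
  have "(\<integral>\<omega>. (\<Prod>x\<in>C. exp (c x * X x \<omega>)) \<partial>M) = (\<Prod>x\<in>C. \<integral>\<omega>. exp (c x * X x \<omega>) \<partial>M)"
    using indep_vars_lebesgue_integral[OF assms(1) ind int] by simp
  also have "\<dots> = (\<Prod>x\<in>C. Phi (c x))"
    using X_exp assms(2) by (intro prod.cong) auto
  finally show "(\<integral>\<omega>. (\<Prod>x\<in>C. exp (c x * X x \<omega>)) \<partial>M) = (\<Prod>x\<in>C. Phi (c x))" .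
qed

definition Pset :: "nat \<Rightarrow> nat \<Rightarrow> nat list set" where
  "Pset k m = (\<lambda>(a,b). a @ d # b) ` (paths d1 k \<times> paths d m)"

definition node :: "nat list \<Rightarrow> nat \<Rightarrow> nat \<times> nat" where
  "node p j = (j, path_pos d (take j p))"

definition J :: "nat \<Rightarrow> nat \<Rightarrow> nat set" where
  "J k m = {Suc k..k + Suc m}"

definition w :: "nat \<Rightarrow> nat \<Rightarrow> nat list \<Rightarrow> 'a \<Rightarrow> real" where
  "w k m p \<omega> = exp (\<beta> * (\<Sum>j\<in>J k m. X (node p j) \<omega>))"

definition S :: "nat \<Rightarrow> nat \<Rightarrow> 'a \<Rightarrow> real" where
  "S k m \<omega> = (\<Sum>p\<in>Pset k m. w k m p \<omega>)"

lemma finite_Pset: "finite (Pset k m)"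
  unfolding Pset_def using finite_paths by auto

lemma inj_Pset: "inj_on (\<lambda>(a,b). a @ d # b) (paths d1 k \<times> paths d m)"
  by (auto simp: inj_on_def paths_def)

lemma card_Pset: "card (Pset k m) = d1 ^ k * d ^ m"
  unfolding Pset_def using inj_Pset by (simp add: card_image card_cartesian_product card_paths)

lemma Pset_E:
  assumes "p \<in> Pset k m"
  obtains a b where "p = a @ d # b" "length a = k" "set a \<subseteq> {1..d1}" "length b = m" "set b \<subseteq> {1..d}"
  using assms unfolding Pset_def paths_def by auto

lemma Pset_paths: "p \<in> Pset k m \<Longrightarrow> length p = k + Suc m \<and> set p \<subseteq> {1..d}"
  using d1_lt d_ge by (elim Pset_E) auto

lemma node_I:
  assumes p: "p \<in> Pset k m" and j: "j \<in> J k m"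
  shows "node p j \<in> I"
proof -
  obtain a b where ab: "p = a @ d # b" "length a = k" "set a \<subseteq> {1..d1}" "length b = m" "set b \<subseteq> {1..d}"
    using p by (rule Pset_E)
  have lp: "length p = k + Suc m" "set p \<subseteq> {1..d}" using Pset_paths[OF p] by auto
  have jl: "j \<le> length p" "k < j" using j lp unfolding J_def by auto
  have st: "set (take j p) \<subseteq> {1..d}" using order_trans[OF set_take_subset lp(2)] .
  have "(length (take j p), path_pos d (take j p)) \<in> dary_tree d" by (rule dary_mem[OF st])
  then have in1: "node p j \<in> dary_tree d" using jl by (simp add: node_def min_def split: if_splits)
  have "node p j \<notin> defect_tree d d1"
  proof
    assume "node p j \<in> defect_tree d d1"
    then have "(j, path_pos d (take j p)) \<in> defect_tree d d1" by (simp add: node_def)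
    from defect_char[OF this] obtain ls where ls: "length ls = j" "set ls \<subseteq> {1..d1}" "path_pos d (take j p) = path_pos d ls"
      by auto
    have "take j p = ls"
      by (rule path_pos_inj[OF _ st _ ls(3)]) (use ls jl d1_lt in auto)
    have "take j p ! k = d"
      using ab jl by (simp add: nth_append)
    moreover have "k < length (take j p)" using jl by simp
    ultimately have "d \<in> set (take j p)"
      using nth_mem[of k "take j p"] by simp
    have "d \<in> set ls" using \<open>take j p = ls\<close> \<open>d \<in> set (take j p)\<close> by simp
    then have "d \<in> {1..d1}" using ls(2) by blast
    then show False using d1_lt by simp
  qed
  then show ?thesis using in1 by simp
qed

lemma node_defect:
  assumes p: "p \<in> Pset k m" and j: "j \<le> k"
  shows "node p j \<in> defect_tree d d1"
proof -
  obtain a b where ab: "p = a @ d # b" "length a = k" "set a \<subseteq> {1..d1}" "length b = m" "set b \<subseteq> {1..d}"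
    using p by (rule Pset_E)
  have tj: "take j p = take j a" using ab j by simp
  have lj: "length (take j a) = j" using ab j by simp
  have st: "set (take j a) \<subseteq> {1..d1}" using order_trans[OF set_take_subset ab(3)] .
  have "(length (take j a), path_pos d (take j a)) \<in> defect_tree d d1" by (rule defect_mem[OF st])
  then show ?thesis unfolding node_def tj lj .
qed

lemma inj_node: "inj_on (node p) A"
  by (auto simp: inj_on_def node_def)

lemma w_prod: "w k m p \<omega> = (\<Prod>x\<in>node p ` J k m. exp (\<beta> * X x \<omega>))"
proof -
  have "w k m p \<omega> = (\<Prod>j\<in>J k m. exp (\<beta> * X (node p j) \<omega>))"
    unfolding w_def sum_distrib_left by (rule exp_sum) (simp add: J_def)
  also have "\<dots> = (\<Prod>x\<in>node p ` J k m. exp (\<beta> * X x \<omega>))"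
    by (simp add: prod.reindex[OF inj_node])
  finally show ?thesis .
qed

lemma card_nodes: "card (node p ` J k m) = Suc m"
  using card_image[OF inj_node] by (simp add: J_def)

lemma nodes_I: "p \<in> Pset k m \<Longrightarrow> node p ` J k m \<subseteq> I"
  using node_I by auto

lemma E_w:
  assumes "p \<in> Pset k m"
  shows "integrable M (w k m p)" "(\<integral>\<omega>. w k m p \<omega> \<partial>M) = Phi \<beta> ^ Suc m"
proof -
  have f: "finite (node p ` J k m)" by (simp add: J_def)
  show "integrable M (w k m p)"
    unfolding w_prod[abs_def] using prod_exp(1)[OF f nodes_I[OF assms], of "\<lambda>_. \<beta>"] by simp
  show "(\<integral>\<omega>. w k m p \<omega> \<partial>M) = Phi \<beta> ^ Suc m"
    unfolding w_prod using prod_exp(2)[OF f nodes_I[OF assms], of "\<lambda>_. \<beta>"] by (simp add: card_nodes)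
qed


lemma nodes_inter:
  assumes p: "p \<in> Pset k m" and q: "q \<in> Pset k m"
  shows "card (node p ` J k m \<inter> node q ` J k m) = cpl p q - k"
proof -
  have lp: "length p = k + Suc m" "set p \<subseteq> {1..d}" using Pset_paths[OF p] by auto
  have lq: "length q = k + Suc m" "set q \<subseteq> {1..d}" using Pset_paths[OF q] by auto
  have eq: "node p ` J k m \<inter> node q ` J k m = node p ` {j \<in> J k m. take j p = take j q}"
  proof (intro set_eqI iffI)
    fix x assume "x \<in> node p ` J k m \<inter> node q ` J k m"
    then obtain j j' where jj: "j \<in> J k m" "j' \<in> J k m" "x = node p j" "x = node q j'" by auto
    then have "j = j'" by (simp add: node_def)
    then have pe: "path_pos d (take j p) = path_pos d (take j q)" using jj by (simp add: node_def)
    have jl: "j \<le> k + Suc m" using jj by (simp add: J_def)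
    have "take j p = take j q"
      by (rule path_pos_inj[OF _ _ _ pe])
         (use jl lp lq order_trans[OF set_take_subset lp(2)] order_trans[OF set_take_subset lq(2)] in auto)
    then show "x \<in> node p ` {j \<in> J k m. take j p = take j q}" using jj by auto
  next
    fix x assume "x \<in> node p ` {j \<in> J k m. take j p = take j q}"
    then obtain j where "j \<in> J k m" "take j p = take j q" "x = node p j" by auto
    then have "x = node q j" by (simp add: node_def)
    have "x \<in> node p ` J k m" using \<open>j \<in> J k m\<close> \<open>x = node p j\<close> by blast
    moreover have "x \<in> node q ` J k m" using \<open>j \<in> J k m\<close> \<open>x = node q j\<close> by blast
    ultimately show "x \<in> node p ` J k m \<inter> node q ` J k m" by blast
  qed
  have "{j \<in> J k m. take j p = take j q} = {j \<in> J k m. j \<le> cpl p q}"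
    using take_eq_iff_cpl[of p q] lp lq by (auto simp: J_def)
  also have "\<dots> = {Suc k..cpl p q}"
    using cpl_le[of p q] lp by (auto simp: J_def)
  finally have "card (node p ` J k m \<inter> node q ` J k m) = card {Suc k..cpl p q}"
    unfolding eq by (simp add: card_image[OF inj_node])
  then show ?thesis by simp
qed

lemma E_ww:
  assumes p: "p \<in> Pset k m" and q: "q \<in> Pset k m"
  shows "integrable M (\<lambda>\<omega>. w k m p \<omega> * w k m q \<omega>)"
    "(\<integral>\<omega>. w k m p \<omega> * w k m q \<omega> \<partial>M) = Phi (2 * \<beta>) ^ (cpl p q - k) * Phi \<beta> ^ (2 * Suc m - 2 * (cpl p q - k))"
proof -
  define A where "A = node p ` J k m"
  define B where "B = node q ` J k m"
  define c where "c x = (if x \<in> A then \<beta> else 0) + (if x \<in> B then \<beta> else 0)" for x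
  have fA: "finite A" "finite B" by (simp_all add: A_def B_def J_def)
  have CI: "A \<union> B \<subseteq> I" using nodes_I[OF p] nodes_I[OF q] by (auto simp: A_def B_def)
  have prod_eq: "w k m p \<omega> * w k m q \<omega> = (\<Prod>x\<in>A \<union> B. exp (c x * X x \<omega>))" for \<omega>
  proof -
    have "(\<Prod>x\<in>A \<union> B. exp (c x * X x \<omega>)) =
        (\<Prod>x\<in>A \<union> B. (if x \<in> A then exp (\<beta> * X x \<omega>) else 1) * (if x \<in> B then exp (\<beta> * X x \<omega>) else 1))"
      by (intro prod.cong) (auto simp: c_def distrib_right exp_add)
    also have "\<dots> = (\<Prod>x\<in>A \<union> B. (if x \<in> A then exp (\<beta> * X x \<omega>) else 1)) * (\<Prod>x\<in>A \<union> B. (if x \<in> B then exp (\<beta> * X x \<omega>) else 1))"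
      by (rule prod.distrib)
    also have "\<dots> = (\<Prod>x\<in>(A \<union> B) \<inter> A. exp (\<beta> * X x \<omega>)) * (\<Prod>x\<in>(A \<union> B) \<inter> B. exp (\<beta> * X x \<omega>))"
      using prod.inter_restrict[of "A \<union> B" "\<lambda>x. exp (\<beta> * X x \<omega>)" A] prod.inter_restrict[of "A \<union> B" "\<lambda>x. exp (\<beta> * X x \<omega>)" B] fA
      by simp
    also have "\<dots> = w k m p \<omega> * w k m q \<omega>"
      by (simp add: w_prod A_def B_def Int_absorb1)
    finally show ?thesis by simp
  qed
  show "integrable M (\<lambda>\<omega>. w k m p \<omega> * w k m q \<omega>)"
    unfolding prod_eq using prod_exp(1)[OF _ CI] fA by simp
  have "(\<integral>\<omega>. w k m p \<omega> * w k m q \<omega> \<partial>M) = (\<Prod>x\<in>A \<union> B. Phi (c x))"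
    unfolding prod_eq using prod_exp(2)[OF _ CI] fA by simp
  also have "\<dots> = (\<Prod>x\<in>(A \<union> B) - A \<inter> B. Phi (c x)) * (\<Prod>x\<in>A \<inter> B. Phi (c x))"
    by (rule prod.subset_diff) (use fA in auto)
  also have "(\<Prod>x\<in>A \<inter> B. Phi (c x)) = Phi (2 * \<beta>) ^ card (A \<inter> B)"
    by (simp add: c_def)
  also have "(\<Prod>x\<in>(A \<union> B) - A \<inter> B. Phi (c x)) = Phi \<beta> ^ card ((A \<union> B) - A \<inter> B)"
  proof -
    have "(\<Prod>x\<in>(A \<union> B) - A \<inter> B. Phi (c x)) = (\<Prod>x\<in>(A \<union> B) - A \<inter> B. Phi \<beta>)"
      by (intro prod.cong) (auto simp: c_def)
    then show ?thesis by simp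
  qed
  finally have "(\<integral>\<omega>. w k m p \<omega> * w k m q \<omega> \<partial>M) = Phi \<beta> ^ card ((A \<union> B) - A \<inter> B) * Phi (2 * \<beta>) ^ card (A \<inter> B)" .
  moreover have "card (A \<inter> B) = cpl p q - k" using nodes_inter[OF p q] by (simp add: A_def B_def)
  moreover have "card ((A \<union> B) - A \<inter> B) = 2 * Suc m - 2 * (cpl p q - k)"
  proof -
    have "card (A \<union> B) + card (A \<inter> B) = card A + card B" using card_Un_Int[OF fA] by simp
    moreover have "card A = Suc m" "card B = Suc m" by (simp_all add: A_def B_def card_nodes)
    moreover have "card ((A \<union> B) - A \<inter> B) = card (A \<union> B) - card (A \<inter> B)"
      by (rule card_Diff_subset) (use fA in auto)
    ultimately show ?thesis using \<open>card (A \<inter> B) = cpl p q - k\<close> by simp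
  qed
  ultimately show "(\<integral>\<omega>. w k m p \<omega> * w k m q \<omega> \<partial>M) = Phi (2 * \<beta>) ^ (cpl p q - k) * Phi \<beta> ^ (2 * Suc m - 2 * (cpl p q - k))"
    by simp
qed


lemma pair_bound:
  assumes "\<rho> > 0"
  shows "(\<Sum>p\<in>Pset k m. \<Sum>q\<in>Pset k m. \<rho> ^ (cpl p q - k) - 1) \<le> real d1 ^ k * \<rho> * Tsum d m \<rho>"
proof -
  let ?f = "\<lambda>(a::nat list, b). a @ d # b"
  let ?A = "paths d1 k \<times> paths d m"
  have "(\<Sum>p\<in>Pset k m. \<Sum>q\<in>Pset k m. \<rho> ^ (cpl p q - k) - 1) = (\<Sum>x\<in>?A. \<Sum>y\<in>?A. \<rho> ^ (cpl (?f x) (?f y) - k) - 1)"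
    unfolding Pset_def by (simp only: sum.reindex[OF inj_Pset] comp_def)
  also have "\<dots> \<le> (\<Sum>x\<in>?A. \<Sum>y\<in>?A. (case x of (a,b) \<Rightarrow> case y of (a',b') \<Rightarrow> if a = a' then \<rho> * \<rho> ^ cpl b b' else 0))"
  proof (intro sum_mono)
    fix x y assume x: "x \<in> ?A" and y: "y \<in> ?A"
    obtain a b where ab: "x = (a, b)" by (cases x)
    obtain a' b' where ab': "y = (a', b')" by (cases y)
    have la: "length a = k" "length a' = k" using x y ab ab' by (auto simp: paths_def)
    show "\<rho> ^ (cpl (?f x) (?f y) - k) - 1 \<le> (case x of (a,b) \<Rightarrow> case y of (a',b') \<Rightarrow> if a = a' then \<rho> * \<rho> ^ cpl b b' else 0)"
    proof (cases "a = a'")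
      case True
      have "cpl (a @ d # b) (a' @ d # b') = k + Suc (cpl b b')"
        using True cpl_append_same[of a "d # b" "d # b'"] la by simp
      then show ?thesis using ab ab' True by simp
    next
      case False
      have "cpl (a @ d # b) (a' @ d # b') < k" using cpl_append_diff[OF _ False] la by simp
      then show ?thesis using ab ab' False by simp
    qed
  qed
  also have "\<dots> = real (card (paths d1 k)) * (\<Sum>b\<in>paths d m. \<Sum>b'\<in>paths d m. \<rho> * \<rho> ^ cpl b b')"
    using sum_pairs_delta[of "paths d1 k" "paths d m" "\<lambda>b b'. \<rho> * \<rho> ^ cpl b b'"] finite_paths
    by (simp add: case_prod_unfold)
  also have "\<dots> = real d1 ^ k * \<rho> * Tsum d m \<rho>"
    by (simp add: card_paths Tsum_def sum_distrib_left mult.assoc)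
  finally show ?thesis .
qed

lemma w_int: "p \<in> Pset k m \<Longrightarrow> w k m p \<in> borel_measurable M"
  using E_w(1) by (rule borel_measurable_integrable)

lemma S_int: "integrable M (S k m)"
  unfolding S_def[abs_def] by (rule Bochner_Integration.integrable_sum) (use E_w(1) in auto)

lemma S_sq: "S k m \<omega> ^ 2 = (\<Sum>p\<in>Pset k m. \<Sum>q\<in>Pset k m. w k m p \<omega> * w k m q \<omega>)"
  unfolding S_def power2_eq_square by (simp add: sum_product)

lemma S2_int: "integrable M (\<lambda>\<omega>. S k m \<omega> ^ 2)"
  unfolding S_sq by (intro Bochner_Integration.integrable_sum) (use E_ww(1) in auto)

lemma ES: "expectation (S k m) = real d1 ^ k * real d ^ m * Phi \<beta> ^ Suc m"
proof -
  have "expectation (S k m) = (\<Sum>p\<in>Pset k m. expectation (w k m p))"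
    unfolding S_def[abs_def] by (rule Bochner_Integration.integral_sum) (use E_w(1) in auto)
  also have "\<dots> = (\<Sum>p\<in>Pset k m. Phi \<beta> ^ Suc m)" using E_w(2) by (intro sum.cong) auto
  also have "\<dots> = real d1 ^ k * real d ^ m * Phi \<beta> ^ Suc m" by (simp add: card_Pset)
  finally show ?thesis .
qed

lemma var_bound:
  defines "\<rho> \<equiv> Phi (2 * \<beta>) / Phi \<beta> ^ 2"
  shows "variance (S k m) \<le> Phi \<beta> ^ (2 * Suc m) * (real d1 ^ k * \<rho> * Tsum d m \<rho>)"
proof -
  let ?L = "Phi \<beta>" and ?M = "Suc m"
  have L0: "?L > 0" by (rule Phi_pos)
  have r0: "\<rho> > 0" unfolding \<rho>_def using Phi_pos[of "2 * \<beta>"] L0 by simp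
  have E2: "expectation (\<lambda>\<omega>. S k m \<omega> ^ 2) = (\<Sum>p\<in>Pset k m. \<Sum>q\<in>Pset k m. ?L ^ (2 * ?M) * \<rho> ^ (cpl p q - k))"
  proof -
    have "expectation (\<lambda>\<omega>. S k m \<omega> ^ 2) = (\<Sum>p\<in>Pset k m. \<Sum>q\<in>Pset k m. expectation (\<lambda>\<omega>. w k m p \<omega> * w k m q \<omega>))"
      unfolding S_sq using E_ww(1) by (simp add: integral_sum integrable_sum)
    also have "\<dots> = (\<Sum>p\<in>Pset k m. \<Sum>q\<in>Pset k m. ?L ^ (2 * ?M) * \<rho> ^ (cpl p q - k))"
    proof (intro sum.cong refl)
      fix p q assume p: "p \<in> Pset k m" and q: "q \<in> Pset k m"
      define G where "G = cpl p q - k"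
      have "G \<le> ?M" using cpl_le[of p q] Pset_paths[OF p] by (simp add: G_def)
      then obtain r where r: "2 * ?M = 2 * G + r" "r = 2 * ?M - 2 * G" by auto
      have "?L ^ (2 * ?M) * \<rho> ^ G = ?L ^ (2 * G) * ?L ^ r * (Phi (2 * \<beta>) ^ G / (?L ^ 2) ^ G)"
        unfolding r(1) \<rho>_def by (simp add: power_add power_divide)
      also have "\<dots> = Phi (2 * \<beta>) ^ G * ?L ^ r"
      proof -
        have eqL: "?L ^ (2 * G) = (?L ^ 2) ^ G" by (simp add: power_mult)
        have nz: "(?L ^ 2) ^ G \<noteq> 0" using L0 by simp
        have gen: "\<And>A B C::real. A \<noteq> 0 \<Longrightarrow> A * B * (C / A) = C * B" by simp
        show ?thesis unfolding eqL by (rule gen[OF nz])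
      qed
      finally show "expectation (\<lambda>\<omega>. w k m p \<omega> * w k m q \<omega>) = ?L ^ (2 * ?M) * \<rho> ^ (cpl p q - k)"
        using E_ww(2)[OF p q] r(2) by (simp add: G_def)
    qed
    finally show ?thesis .
  qed
  have E1: "(expectation (S k m))\<^sup>2 = (\<Sum>p\<in>Pset k m. \<Sum>q\<in>Pset k m. ?L ^ (2 * ?M))"
    by (simp add: ES card_Pset power2_eq_square power_mult_distrib power_mult algebra_simps)
  have "variance (S k m) = expectation (\<lambda>\<omega>. S k m \<omega> ^ 2) - (expectation (S k m))\<^sup>2"
    by (rule variance_eq[OF S_int S2_int])
  also have "\<dots> = ?L ^ (2 * ?M) * (\<Sum>p\<in>Pset k m. \<Sum>q\<in>Pset k m. \<rho> ^ (cpl p q - k) - 1)"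
    unfolding E1 E2 by (simp add: sum_subtractf sum_distrib_left right_diff_distrib)
  also have "\<dots> \<le> ?L ^ (2 * ?M) * (real d1 ^ k * \<rho> * Tsum d m \<rho>)"
    using pair_bound[OF r0] L0 by (intro mult_left_mono) auto
  finally show ?thesis .
qed


lemma S_meas[measurable]: "S k m \<in> borel_measurable M"
  using S_int by (rule borel_measurable_integrable)

lemma bad_prob:
  defines "\<rho> \<equiv> Phi (2 * \<beta>) / Phi \<beta> ^ 2"
  shows "prob {\<omega> \<in> space M. S k m \<omega> \<le> expectation (S k m) / 2}
    \<le> 4 * \<rho> * real (Suc m) * (max (real d * \<rho>) (real d ^ 2) / real d ^ 2) ^ m / real d1 ^ k"
proof -
  let ?L = "Phi \<beta>" and ?\<mu> = "expectation (S k m)"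
  have L0: "?L > 0" by (rule Phi_pos)
  have r0: "\<rho> > 0" unfolding \<rho>_def using Phi_pos[of "2 * \<beta>"] L0 by simp
  have d0: "real d > 0" "real d1 > 0" using d_ge d1_ge by auto
  have mu: "?\<mu> = real d1 ^ k * real d ^ m * ?L ^ Suc m" by (rule ES)
  have mu0: "?\<mu> > 0" unfolding mu using L0 d0 by simp
  have "prob {\<omega> \<in> space M. S k m \<omega> \<le> ?\<mu> / 2} \<le> prob {\<omega> \<in> space M. \<bar>S k m \<omega> - ?\<mu>\<bar> \<ge> ?\<mu> / 2}"
  proof (rule finite_measure_mono)
    show "{\<omega> \<in> space M. S k m \<omega> \<le> ?\<mu> / 2} \<subseteq> {\<omega> \<in> space M. \<bar>S k m \<omega> - ?\<mu>\<bar> \<ge> ?\<mu> / 2}"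
      by (auto simp: abs_if)
  qed measurable
  also have "\<dots> \<le> variance (S k m) / (?\<mu> / 2)\<^sup>2"
    by (rule Chebyshev_inequality) (use S2_int mu0 in auto)
  also have "\<dots> \<le> ?L ^ (2 * Suc m) * (real d1 ^ k * \<rho> * Tsum d m \<rho>) / (?\<mu> / 2)\<^sup>2"
    using var_bound[of k m] unfolding \<rho>_def by (intro divide_right_mono) auto
  also have "\<dots> = 4 * \<rho> * Tsum d m \<rho> / (real d1 ^ k * (real d ^ 2) ^ m)"
    unfolding mu using L0 d0 power_add[of ?L m m, symmetric]
    by (simp add: mult_2_right power2_eq_square power_mult_distrib power_mult[symmetric] field_simps)
  also have "\<dots> \<le> 4 * \<rho> * (real (Suc m) * (max (real d * \<rho>) (real d ^ 2)) ^ m) / (real d1 ^ k * (real d ^ 2) ^ m)"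
    using Tsum_bound[of \<rho> d m] r0 d0 by (intro divide_right_mono mult_left_mono) auto
  also have "\<dots> = 4 * \<rho> * real (Suc m) * (max (real d * \<rho>) (real d ^ 2) / real d ^ 2) ^ m / real d1 ^ k"
    using d0 by (simp add: power_divide field_simps)
  finally show ?thesis .
qed


lemma Z_lower: "Z_ST d d1 X \<beta> u (k + Suc m) \<omega> \<ge> exp (\<beta> * u * real k) * S k m \<omega>"
proof -
  have sub: "Pset k m \<subseteq> paths d (k + Suc m)" using Pset_paths by (auto simp: paths_def)
  have eqp: "exp (\<beta> * (\<Sum>j\<in>{1..k + Suc m}. env d d1 u X (j, path_pos d (take j p)) \<omega>)) = exp (\<beta> * u * real k) * w k m p \<omega>"
    if p: "p \<in> Pset k m" for p
  proof -
    have split: "{1..k + Suc m} = {1..k} \<union> J k m" "{1..k} \<inter> J k m = {}" by (auto simp: J_def)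
    have "(\<Sum>j\<in>{1..k + Suc m}. env d d1 u X (j, path_pos d (take j p)) \<omega>)
        = (\<Sum>j\<in>{1..k}. env d d1 u X (node p j) \<omega>) + (\<Sum>j\<in>J k m. env d d1 u X (node p j) \<omega>)"
      unfolding split(1) node_def by (rule sum.union_disjoint) (use split(2) in \<open>auto simp: J_def\<close>)
    also have "(\<Sum>j\<in>{1..k}. env d d1 u X (node p j) \<omega>) = real k * u"
      using node_defect[OF p] by (simp add: env_def)
    also have "(\<Sum>j\<in>J k m. env d d1 u X (node p j) \<omega>) = (\<Sum>j\<in>J k m. X (node p j) \<omega>)"
      using node_I[OF p] by (intro sum.cong) (auto simp: env_def)
    finally show ?thesis unfolding w_def by (simp add: exp_add[symmetric] algebra_simps)
  qed
  have "exp (\<beta> * u * real k) * S k m \<omega> = (\<Sum>p\<in>Pset k m. exp (\<beta> * u * real k) * w k m p \<omega>)"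
    by (simp add: S_def sum_distrib_left)
  also have "\<dots> = (\<Sum>p\<in>Pset k m. exp (\<beta> * (\<Sum>j\<in>{1..k + Suc m}. env d d1 u X (j, path_pos d (take j p)) \<omega>)))"
    by (rule sum.cong[OF refl]) (rule eqp[symmetric])
  also have "\<dots> \<le> Z_ST d d1 X \<beta> u (k + Suc m) \<omega>"
    unfolding Z_ST_def by (rule sum_mono2[OF finite_paths sub]) auto
  finally show ?thesis .
qed

end

lemma max_mult_pos: "(c::real) > 0 \<Longrightarrow> max (c * a) (c * b) = c * max a b"
  by (simp add: max_def)

theorem lemma2p10:
  fixes M :: "'a measure" and V :: "'a \<Rightarrow> real" and X :: "nat \<times> nat \<Rightarrow> 'a \<Rightarrow> real"
    and d d1 :: nat and \<beta> t u :: real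
  assumes "prob_space M"
    and "d \<ge> 2" and "1 \<le> d1" and "d1 < d"
    and "V \<in> borel_measurable M"
    and "\<not> (\<exists>c. AE \<omega> in M. V \<omega> = c)"
    and "\<And>b. integrable M (\<lambda>\<omega>. exp (b * V \<omega>))"
    and "prob_space.indep_vars M (\<lambda>_. borel) X (dary_tree d - defect_tree d d1)"
    and "\<And>x. x \<in> dary_tree d - defect_tree d d1 \<Longrightarrow> distr M borel (X x) = distr M borel V"
    and "\<beta> > 0" and "0 < t" and "t < 1"
    and "(Theta M V d \<beta> / ((real d)^2 * exp (2 * lam M V \<beta>))) powr (1 - t) < real d1 powr t"
  shows "AE \<omega> in M.
           liminf (\<lambda>n. ereal (ln (Z_ST d d1 X \<beta> u n \<omega>) / real n))
             \<ge> ereal ((lam M V \<beta> + ln (real d)) * (1 - t) + (\<beta> * u + ln (real d1)) * t)"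
proof -
  have "poly M V X d d1"
    unfolding poly_def poly_axioms_def using assms by auto
  then interpret P: poly M V X d d1 \<beta> .
  have [measurable]: "\<And>k m. P.S k m \<in> borel_measurable M" by (rule P.S_meas)
  define L where "L = P.Phi \<beta>"
  define \<rho> where "\<rho> = P.Phi (2 * \<beta>) / L ^ 2"
  define r where "r = max (real d * \<rho>) (real d ^ 2) / real d ^ 2"
  define q where "q = r powr (1 - t) / real d1 powr t"
  have L0: "L > 0" unfolding L_def by (rule P.Phi_pos)
  have P20: "P.Phi (2 * \<beta>) > 0" by (rule P.Phi_pos)
  have \<rho>0: "\<rho> > 0" unfolding \<rho>_def using L0 P20 by simp
  have d0: "real d > 0" "real d1 \<ge> 1" using assms by auto
  have r1: "r \<ge> 1"
  proof -
    have "max (real d * \<rho>) (real d ^ 2) \<ge> real d ^ 2" by simp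
    moreover have "real d ^ 2 > 0" using d0 by simp
    ultimately show ?thesis unfolding r_def by (simp add: le_divide_eq)
  qed
  have lamL: "lam M V \<beta> = ln L" unfolding lam_def L_def P.Phi_def ..
  have lam2: "lam M V (2 * \<beta>) = ln (P.Phi (2 * \<beta>))" unfolding lam_def P.Phi_def ..
  have e2: "exp (2 * lam M V \<beta>) = L ^ 2"
  proof -
    have "exp (2 * ln L) = exp (ln L) * exp (ln L)" by (metis exp_add mult_2)
    then show ?thesis unfolding lamL using L0 by (simp add: power2_eq_square)
  qed
  have hyp: "Theta M V d \<beta> / ((real d)^2 * exp (2 * lam M V \<beta>)) = r"
  proof -
    have "Theta M V d \<beta> = max ((real d)^2 * L^2) (real d * P.Phi (2 * \<beta>))"
      unfolding Theta_def e2 lam2 using P20 by simp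
    also have "\<dots> = L^2 * max ((real d)^2) (real d * \<rho>)"
      using L0 by (subst max_mult_pos[symmetric]) (auto simp: \<rho>_def algebra_simps)
    finally have Th: "Theta M V d \<beta> = L^2 * max ((real d)^2) (real d * \<rho>)" .
    have gen: "\<And>a b c::real. a \<noteq> 0 \<Longrightarrow> a * c / (b * a) = c / b" by simp
    have "L ^ 2 \<noteq> 0" using L0 by simp
    from gen[OF this] show ?thesis unfolding e2 r_def Th by (simp add: max.commute)
  qed
  have q1: "q < 1" and q0: "q \<ge> 0"
  proof -
    have "r powr (1 - t) < real d1 powr t" using assms(13) hyp by simp
    moreover have "real d1 powr t > 0" using d0 by simp
    ultimately show "q < 1" unfolding q_def by simp
    show "q \<ge> 0" unfolding q_def by simp
  qed
  define kk where "kk n = nat \<lfloor>t * real n\<rfloor>" for n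
  define mm where "mm n = n - kk n - 1" for n
  have tn: "t * real n \<ge> 0" for n using assms(11) by simp
  have kk_le: "real (kk n) \<le> t * real n" for n
    unfolding kk_def by (rule nat_floor_bounds(1)[OF tn])
  have kk_gt: "t * real n - 1 < real (kk n)" for n
    unfolding kk_def by (rule nat_floor_bounds(2)[OF tn])
  have kn: "kk n + Suc (mm n) = n" and mmr: "real (mm n) = real n - real (kk n) - 1" if "n \<ge> 1" for n
  proof -
    have "t * real n < 1 * real n" by (rule mult_strict_right_mono) (use assms(12) that in auto)
    then have "real (kk n) < real n" using kk_le[of n] by simp
    then have "kk n < n" by simp
    then show "kk n + Suc (mm n) = n" "real (mm n) = real n - real (kk n) - 1" unfolding mm_def by auto
  qed
  define A where "A n = {\<omega> \<in> space M. P.S (kk n) (mm n) \<omega> \<le> (\<integral>\<omega>. P.S (kk n) (mm n) \<omega> \<partial>M) / 2}" for n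
  have Ameas: "A n \<in> sets M" for n unfolding A_def by measurable
  have bound: "measure M (A n) \<le> 4 * \<rho> * real d1 * (real n * q ^ n)" if n1: "n \<ge> 1" for n
  proof -
    let ?k = "kk n" and ?m = "mm n"
    have r0: "r > 0" using r1 by simp
    have "measure M (A n) \<le> 4 * \<rho> * real (Suc ?m) * r ^ ?m / real d1 ^ ?k"
      using P.bad_prob[of ?k ?m] unfolding A_def r_def \<rho>_def L_def by simp
    also have "\<dots> \<le> 4 * \<rho> * real n * r powr ((1 - t) * real n) / (real d1 powr (t * real n) / real d1)"
    proof (rule frac_le)
      have "real (Suc ?m) \<le> real n" using mmr[OF n1] kk_gt[of n] assms(11) by simp
      moreover have "r ^ ?m \<le> r powr ((1 - t) * real n)"
      proof -
        have "r ^ ?m = r powr real ?m" using powr_realpow[OF r0] by simp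
        also have "\<dots> \<le> r powr ((1 - t) * real n)"
          by (rule powr_mono) (use mmr[OF n1] kk_gt[of n] r1 in \<open>auto simp: algebra_simps\<close>)
        finally show ?thesis .
      qed
      ultimately show "4 * \<rho> * real (Suc ?m) * r ^ ?m \<le> 4 * \<rho> * real n * r powr ((1 - t) * real n)"
        using \<rho>0 r0 by (intro mult_mono mult_left_mono) auto
      show "0 \<le> 4 * \<rho> * real n * r powr ((1 - t) * real n)" using \<rho>0 by simp
      show "0 < real d1 powr (t * real n) / real d1" using d0 by simp
      have "real d1 powr (t * real n) / real d1 = real d1 powr (t * real n - 1)"
        using d0 by (simp add: powr_diff)
      also have "\<dots> \<le> real d1 powr real ?k"
        by (rule powr_mono) (use kk_gt[of n] d0 in auto)
      also have "\<dots> = real d1 ^ ?k" using d0 by (simp add: powr_realpow)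
      finally show "real d1 powr (t * real n) / real d1 \<le> real d1 ^ ?k" .
    qed
    also have "\<dots> = 4 * \<rho> * real d1 * (real n * q ^ n)"
    proof -
      have "q ^ n = r powr ((1 - t) * real n) / real d1 powr (t * real n)"
        unfolding q_def power_divide using r0 d0 by (simp add: powr_power mult.commute)
      then show ?thesis using d0 by (simp add: field_simps)
    qed
    finally show ?thesis .
  qed
  have summ: "summable (\<lambda>n. measure M (A n))"
  proof (rule summable_comparison_test')
    show "summable (\<lambda>n. 4 * \<rho> * real d1 * (real n * q ^ n))"
      by (rule summable_mult[OF summable_nq[OF q0 q1]])
    show "norm (measure M (A n)) \<le> 4 * \<rho> * real d1 * (real n * q ^ n)" if "n \<ge> 1" for n
      using bound[OF that] by simp
  qed
  have AE: "AE \<omega> in M. eventually (\<lambda>n. \<omega> \<in> space M - A n) sequentially"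
    by (rule borel_cantelli_AE1[OF Ameas _ summ]) (simp add: P.emeasure_finite less_top[symmetric])
  define target where "target = (lam M V \<beta> + ln (real d)) * (1 - t) + (\<beta> * u + ln (real d1)) * t"
  define low where "low n = (real (kk n) / real n) * (\<beta> * u + ln (real d1))
      + (1 - real (kk n) / real n) * (ln L + ln (real d)) - (ln (real d) + ln 2) / real n" for n
  have lim: "low \<longlonglongrightarrow> target"
  proof -
    have kt: "(\<lambda>n. real (kk n) / real n) \<longlonglongrightarrow> t" unfolding kk_def by (rule floor_ratio[OF assms(11)])
    have "low \<longlonglongrightarrow> t * (\<beta> * u + ln (real d1)) + (1 - t) * (ln L + ln (real d)) - 0"
      unfolding low_def[abs_def]
      by (intro tendsto_intros kt lim_const_over_n)
    then show ?thesis unfolding target_def lamL by (simp add: algebra_simps)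
  qed
  from AE show ?thesis
  proof eventually_elim
    case (elim \<omega>)
    have ev: "\<forall>\<^sub>F n in sequentially. ereal (low n) \<le> ereal (ln (Z_ST d d1 X \<beta> u n \<omega>) / real n)"
      using elim eventually_ge_at_top[of "1::nat"]
    proof eventually_elim
      case (elim n)
      let ?k = "kk n" and ?m = "mm n"
      have n1: "n \<ge> 1" using elim by simp
      have np: "real n > 0" using n1 by simp
      let ?\<mu> = "real d1 ^ ?k * real d ^ ?m * L ^ Suc ?m"
      have mu0: "?\<mu> > 0" using d0 L0 by simp
      have "\<not> P.S ?k ?m \<omega> \<le> (\<integral>\<omega>. P.S ?k ?m \<omega> \<partial>M) / 2" using elim unfolding A_def by auto
      then have S: "P.S ?k ?m \<omega> > ?\<mu> / 2" using P.ES[of ?k ?m] unfolding L_def by simp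
      have Z: "Z_ST d d1 X \<beta> u n \<omega> \<ge> exp (\<beta> * u * real ?k) * P.S ?k ?m \<omega>"
        using P.Z_lower[of u ?k ?m \<omega>] kn[OF n1] by simp
      have Zl: "Z_ST d d1 X \<beta> u n \<omega> \<ge> exp (\<beta> * u * real ?k) * (?\<mu> / 2)"
        using Z S by (smt (verit) exp_gt_zero mult_strict_left_mono)
      have "ln (exp (\<beta> * u * real ?k) * (?\<mu> / 2)) \<le> ln (Z_ST d d1 X \<beta> u n \<omega>)"
      proof -
        have "exp (\<beta> * u * real ?k) * (?\<mu> / 2) > 0" using mu0 by simp
        then show ?thesis using Zl by (subst ln_le_cancel_iff) auto
      qed
      moreover have "ln (exp (\<beta> * u * real ?k) * (?\<mu> / 2)) = \<beta> * u * real ?k + real ?k * ln (real d1)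
          + real ?m * ln (real d) + real (Suc ?m) * ln L - ln 2"
        using d0 L0 by (simp add: ln_mult ln_div ln_realpow algebra_simps)
      ultimately have "\<beta> * u * real ?k + real ?k * ln (real d1) + real ?m * ln (real d) + real (Suc ?m) * ln L - ln 2
          \<le> ln (Z_ST d d1 X \<beta> u n \<omega>)" by simp
      then have "(\<beta> * u * real ?k + real ?k * ln (real d1) + real ?m * ln (real d) + real (Suc ?m) * ln L - ln 2) / real n
          \<le> ln (Z_ST d d1 X \<beta> u n \<omega>) / real n"
        using np by (simp add: divide_right_mono)
      moreover have "(\<beta> * u * real ?k + real ?k * ln (real d1) + real ?m * ln (real d) + real (Suc ?m) * ln L - ln 2) / real n = low n"
      proof -
        have ms: "real (Suc ?m) = real n - real ?k" using mmr[OF n1] by simp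
        show ?thesis unfolding low_def ms mmr[OF n1] using np by (simp add: field_simps)
      qed
      ultimately show ?case by simp
    qed
    have "ereal target = liminf (\<lambda>n. ereal (low n))"
      by (rule lim_imp_Liminf[symmetric]) (use lim in auto)
    also have "\<dots> \<le> liminf (\<lambda>n. ereal (ln (Z_ST d d1 X \<beta> u n \<omega>) / real n))"
      by (rule Liminf_mono[OF ev])
    finally show ?case unfolding target_def .
  qed
qed

end
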